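(* Define integers $M(k;r)$ for $k,r\geq 1$ by $M(k;1)=k$, $M(1;r)=1$, $M(2;r)=r+1$, and for $k\geq 3$, $r\geq 2$, $$M(k;r)=M(k-1;r)+\Delta^{M(k-1;r)}(k-1;r)+M(k;r-1)-1.$$ Then this recursion is well defined (in particular $M(k-1;r)\ge AW(k-1;r)$ whenever $\Delta^{M(k-1;r)}(k-1;r)$ is used), and $AW(k;r)\le M(k;r)$ for all $k,r\geq 1$.
   Context: A sequence of positive integers $w_1<w_2<\dots<w_n$ is an ascending wave if $w_{i+1}-w_i \geq w_i-w_{i-1}$ for $2\le i\le n-1$. For positive integers $k,r$, $AW(k;r)$ denotes the least positive integer $N$ such that every $r$-coloring of $\{1,\dots,N\}$ contains a $k$-term monochromatic ascending wave. For $k\ge 2$ and $M\ge AW(k;r)$: let $\Psi^M(k;r)$ be the set of all $r$-colorings of $\{1,\dots,M\}$; for $\psi\in\Psi^M(k;r)$ let $\chi_k(\psi)$ be the set of monochromatic $k$-term ascending waves under $\psi$; for $w=(w_1,\dots,w_k)\in\chi_k(\psi)$ let $d_{k-1}(w)=w_k-w_{k-1}$; let $\delta_k(\psi)=\min\{d_{k-1}(w): w\in\chi_k(\psi)\}$; and let $\Delta^M(k;r)=\max\{\delta_k(\psi):\psi\in\Psi^M(k;r)\}$. *)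

theory Defs
  imports Main "HOL-Library.FuncSet"
begin

definition ascending_wave :: "nat list \<Rightarrow> bool" where
  "ascending_wave w \<longleftrightarrow>
     (\<forall>x\<in>set w. 0 < x) \<and> sorted_wrt (<) w \<and>
     (\<forall>i. 1 \<le> i \<and> i + 1 < length w \<longrightarrow> w!i - w!(i-1) \<le> w!(i+1) - w!i)"

definition colorings :: "nat \<Rightarrow> nat \<Rightarrow> (nat \<Rightarrow> nat) set" where
  "colorings N r = ({1..N} \<rightarrow>\<^sub>E {..<r})"

definition mono_waves :: "nat \<Rightarrow> nat \<Rightarrow> (nat \<Rightarrow> nat) \<Rightarrow> nat list set" where
  "mono_waves N k c = {w. length w = k \<and> ascending_wave w \<and> set w \<subseteq> {1..N} \<and>
                          (\<forall>x\<in>set w. \<forall>y\<in>set w. c x = c y)}"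

definition wave_property :: "nat \<Rightarrow> nat \<Rightarrow> nat \<Rightarrow> bool" where
  "wave_property k r N \<longleftrightarrow> (\<forall>c\<in>colorings N r. mono_waves N k c \<noteq> {})"

definition AW :: "nat \<Rightarrow> nat \<Rightarrow> nat" where
  "AW k r = (LEAST N. 0 < N \<and> wave_property k r N)"

definition last_gap :: "nat list \<Rightarrow> nat" where
  "last_gap w = w!(length w - 1) - w!(length w - 2)"

definition delta :: "nat \<Rightarrow> nat \<Rightarrow> (nat \<Rightarrow> nat) \<Rightarrow> nat" where
  "delta N k c = Min (last_gap ` mono_waves N k c)"

definition Delta :: "nat \<Rightarrow> nat \<Rightarrow> nat \<Rightarrow> nat" where
  "Delta N k r = Max ((\<lambda>c. delta N k c) ` colorings N r)"

fun M :: "nat \<Rightarrow> nat \<Rightarrow> nat" where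
  "M k r =
    (if k = 0 \<or> r = 0 then 0
     else if r = 1 then k
     else if k = 1 then 1
     else if k = 2 then r + 1
     else M (k-1) r + Delta (M (k-1) r) (k-1) r + M k (r-1) - 1)"

end

theory Submission
  imports Defs
begin

lemma finite_mono_waves: "finite (mono_waves N k c)"
proof -
  have "mono_waves N k c \<subseteq> {w. set w \<subseteq> {1..N} \<and> length w = k}"
    unfolding mono_waves_def by auto
  moreover have "finite {w. set w \<subseteq> {1..N} \<and> length w = k}"
    by (rule finite_lists_length_eq) simp
  ultimately show ?thesis by (rule finite_subset)
qed

lemma finite_colorings: "finite (colorings N r)"
  unfolding colorings_def by (intro finite_PiE) auto

lemma wave_shift:
  assumes "ascending_wave w"
  shows "ascending_wave (map (\<lambda>x. x + s) w)"
  using assms unfolding ascending_wave_def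
  by (auto simp: sorted_wrt_map)

lemma wave_append:
  assumes w: "ascending_wave w" and len: "length w \<ge> 2"
    and x: "w!(length w - 1) + last_gap w \<le> x"
  shows "ascending_wave (w @ [x])"
proof -
  let ?n = "length w"
  have srt: "sorted_wrt (<) w" and pos: "\<forall>y\<in>set w. 0 < y"
    and gap: "\<And>i. 1 \<le> i \<Longrightarrow> i + 1 < ?n \<Longrightarrow> w!i - w!(i-1) \<le> w!(i+1) - w!i"
    using w unfolding ascending_wave_def by auto
  have lt: "w!(?n-2) < w!(?n-1)"
    by (rule sorted_wrt_nth_less[OF srt]) (use len in auto)
  have lg: "last_gap w > 0" unfolding last_gap_def using lt by simp
  have le: "y \<le> w!(?n-1)" if yin: "y \<in> set w" for y
  proof -
    obtain j where j0: "j < ?n" "w!j = y" using yin by (auto simp: in_set_conv_nth)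
    then have j: "j < ?n" "y = w!j" by simp_all
    show ?thesis
    proof (cases "j = ?n - 1")
      case True then show ?thesis using j by simp
    next
      case False
      then have "j < ?n - 1" using j by linarith
      then have "w!j < w!(?n-1)" by (intro sorted_wrt_nth_less[OF srt]) (use len in auto)
      then show ?thesis using j by simp
    qed
  qed
  have xg: "x > w!(?n-1)" using x lg by linarith
  have s2: "sorted_wrt (<) (w @ [x])"
    unfolding sorted_wrt_append
  proof (intro conjI)
    show "\<forall>a\<in>set w. \<forall>b\<in>set [x]. a < b" using le xg by fastforce
  qed (use srt in auto)
  have p2: "\<forall>y\<in>set (w@[x]). 0 < y" using pos xg by auto
  have g2: "(w@[x])!i - (w@[x])!(i-1) \<le> (w@[x])!(i+1) - (w@[x])!i"
    if "1 \<le> i" "i + 1 < length (w@[x])" for i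
  proof (cases "i + 1 < ?n")
    case True
    have lt3: "i < ?n" "i - 1 < ?n" "i + 1 < ?n" using True by linarith+
    have "(w@[x])!i = w!i" "(w@[x])!(i-1) = w!(i-1)" "(w@[x])!(i+1) = w!(i+1)"
      using lt3 by (simp_all only: nth_append if_True)
    then show ?thesis using gap[OF that(1) True] by simp
  next
    case False
    then have i: "i = ?n - 1" using that by simp
    have l1: "?n - 1 < ?n" "?n - 2 < ?n" "i - 1 = ?n - 2" "i + 1 = ?n" using i len by linarith+
    have "(w@[x])!i = w!(?n-1)" unfolding i using l1 by (simp only: nth_append if_True)
    moreover have "(w@[x])!(i-1) = w!(?n-2)" unfolding l1(3) using l1 by (simp only: nth_append if_True)
    moreover have "(w@[x])!(i+1) = x" unfolding l1(4) by (rule nth_append_length)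
    moreover have "w!(?n-1) + (w!(?n-1) - w!(?n-2)) \<le> x" using x unfolding last_gap_def .
    ultimately show ?thesis by linarith
  qed
  show ?thesis unfolding ascending_wave_def using s2 p2 g2 by blast
qed

lemma wave_pos:
  assumes "wave_property k r N" "1 \<le> k"
  shows "0 < N"
proof (rule ccontr)
  assume "\<not> 0 < N"
  then have N: "N = 0" by simp
  have "(\<lambda>_. undefined) \<in> colorings N r" unfolding colorings_def N by simp
  then have "mono_waves N k (\<lambda>_. undefined) \<noteq> {}" using assms(1) unfolding wave_property_def by blast
  then obtain w where "w \<in> mono_waves N k (\<lambda>_. undefined)" by blast
  then have "length w = k" "set w \<subseteq> {}" unfolding mono_waves_def N by auto
  then show False using assms(2) by simp
qed

lemma base_r1:
  assumes "1 \<le> k"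
  shows "wave_property k 1 k"
  unfolding wave_property_def
proof
  fix c assume c: "c \<in> colorings k 1"
  have c0: "c x = 0" if "x \<in> {1..k}" for x using c that unfolding colorings_def by auto
  let ?w = "[1..<k+1]"
  have nth: "\<And>i. i < k \<Longrightarrow> ?w!i = Suc i" by (simp del: upt_Suc)
  have "ascending_wave ?w" unfolding ascending_wave_def
    by (auto simp: sorted_wrt_iff_nth_less nth simp del: upt_Suc)
  then have "?w \<in> mono_waves k k c" unfolding mono_waves_def using c0 by auto
  then show "mono_waves k k c \<noteq> {}" by blast
qed

lemma base_k1:
  assumes "1 \<le> r"
  shows "wave_property 1 r 1"
  unfolding wave_property_def
proof
  fix c assume c: "c \<in> colorings 1 r"
  have "ascending_wave [1]" unfolding ascending_wave_def by auto
  then have "[1] \<in> mono_waves 1 1 c" unfolding mono_waves_def by auto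
  then show "mono_waves 1 1 c \<noteq> {}" by blast
qed

lemma base_k2:
  shows "wave_property 2 r (r+1)"
  unfolding wave_property_def
proof
  fix c assume c: "c \<in> colorings (r+1) r"
  have "\<not> inj_on c {1..r+1}"
  proof
    assume "inj_on c {1..r+1}"
    moreover have "c ` {1..r+1} \<subseteq> {..<r}" using c unfolding colorings_def by auto
    ultimately have "card {1..r+1} \<le> card {..<r}" by (intro card_inj_on_le) auto
    then show False by simp
  qed
  then obtain a b where ab: "a \<in> {1..r+1}" "b \<in> {1..r+1}" "a \<noteq> b" "c a = c b"
    unfolding inj_on_def by blast
  define x where "x = min a b"
  define y where "y = max a b"
  have xy: "x < y" "c x = c y" "x \<in> {1..r+1}" "y \<in> {1..r+1}"
    using ab unfolding x_def y_def by (auto simp: min_def max_def)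
  have "ascending_wave [x,y]" unfolding ascending_wave_def using xy by auto
  then have "[x,y] \<in> mono_waves (r+1) 2 c" unfolding mono_waves_def using xy by auto
  then show "mono_waves (r+1) 2 c \<noteq> {}" by blast
qed

lemma step:
  assumes k: "3 \<le> k" and r: "2 \<le> r"
    and P1: "wave_property (k-1) r N" and P2: "wave_property k (r-1) N'"
  shows "wave_property k r (N + Delta N (k-1) r + N' - 1)"
  unfolding wave_property_def
proof
  define D where "D = Delta N (k-1) r"
  define MM where "MM = N + D + N' - 1"
  have N'pos: "0 < N'" using wave_pos[OF P2] k by simp
  fix c assume c: "c \<in> colorings (N + Delta N (k-1) r + N' - 1) r"
  then have c: "c \<in> colorings MM r" unfolding MM_def D_def .
  have crange: "c x < r" if "x \<in> {1..MM}" for x using c that unfolding colorings_def by auto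
  define c0 where "c0 = restrict c {1..N}"
  have c0col: "c0 \<in> colorings N r" unfolding c0_def colorings_def
    using crange N'pos unfolding MM_def by auto
  then have ne: "mono_waves N (k-1) c0 \<noteq> {}" using P1 unfolding wave_property_def by blast
  define d where "d = delta N (k-1) c0"
  have "d \<in> last_gap ` mono_waves N (k-1) c0"
    unfolding d_def delta_def using ne finite_mono_waves by (intro Min_in) auto
  then obtain w where w: "w \<in> mono_waves N (k-1) c0" and wd: "last_gap w = d" by blast
  have dD: "d \<le> D" unfolding D_def Delta_def d_def
    using c0col finite_colorings by (intro Max_ge) auto
  have wprops: "length w = k - 1 \<and> ascending_wave w \<and> set w \<subseteq> {1..N} \<and>
      (\<forall>x\<in>set w. \<forall>y\<in>set w. c0 x = c0 y)" using w unfolding mono_waves_def by (rule CollectD)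
  have wlen: "length w = k - 1" using wprops by blast
  have wav: "ascending_wave w" using wprops by blast
  have wset: "set w \<subseteq> {1..N}" using wprops by blast
  have wmono0: "\<forall>x\<in>set w. \<forall>y\<in>set w. c0 x = c0 y" using conjunct2[OF conjunct2[OF conjunct2[OF wprops]]] .
  have wmono: "\<forall>x\<in>set w. \<forall>y\<in>set w. c x = c y"
  proof (intro ballI)
    fix x y assume xy: "x \<in> set w" "y \<in> set w"
    then have "x \<in> {1..N}" "y \<in> {1..N}" using wset by blast+
    moreover have "c0 x = c0 y" using wmono0 xy by blast
    ultimately show "c x = c y" unfolding c0_def by simp
  qed
  define L where "L = w!(length w - 1)"
  have Lin: "L \<in> set w" unfolding L_def using wlen k by simp
  then have LN: "L \<le> N" "1 \<le> L" using wset by auto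
  define j where "j = c L"
  show "mono_waves MM k c \<noteq> {}"
  proof (cases "\<exists>x. L + d \<le> x \<and> x \<le> MM \<and> c x = j")
    case True
    then obtain x where x: "L + d \<le> x" "x \<le> MM" "c x = j" by blast
    have wav2: "ascending_wave (w @ [x])"
    proof (rule wave_append[OF wav])
      show "2 \<le> length w" using wlen k by linarith
      show "w ! (length w - 1) + last_gap w \<le> x" using x(1) wd unfolding L_def by simp
    qed
    have NM: "N \<le> MM" using N'pos unfolding MM_def by linarith
    have set2: "set (w @ [x]) \<subseteq> {1..MM}"
    proof
      fix a assume "a \<in> set (w @ [x])"
      then have "a \<in> set w \<or> a = x" by auto
      then show "a \<in> {1..MM}"
      proof
        assume "a \<in> set w"
        then have "a \<in> {1..N}" using wset by blast
        then show ?thesis using NM by simp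
      next
        assume "a = x"
        then show ?thesis using x(1,2) LN(2) by simp
      qed
    qed
    have colj: "c a = j" if "a \<in> set (w @ [x])" for a
    proof -
      have "a \<in> set w \<or> a = x" using that by auto
      then show ?thesis
      proof
        assume "a \<in> set w"
        then show ?thesis using wmono Lin unfolding j_def by blast
      next
        assume "a = x"
        then show ?thesis using x(3) by simp
      qed
    qed
    have mono2: "\<forall>a\<in>set (w@[x]). \<forall>b\<in>set (w@[x]). c a = c b"
      using colj by simp
    have len2: "length (w @ [x]) = k" using wlen k by simp
    have "w @ [x] \<in> mono_waves MM k c" unfolding mono_waves_def mem_Collect_eq
      using len2 wav2 set2 mono2 by blast
    then show ?thesis by blast
  next
    case False
    then have avoid: "c x \<noteq> j" if "L + d \<le> x" "x \<le> MM" for x using that by blast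
    define s where "s = L + d - 1"
    define f where "f = (\<lambda>z::nat. if z < j then z else z - 1)"
    define c' where "c' = restrict (\<lambda>y. f (c (y + s))) {1..N'}"
    have inr1: "L + d \<le> y + s" if "y \<in> {1..N'}" for y
    proof -
      have "1 \<le> y" using that by simp
      then show ?thesis unfolding s_def using LN(2) by arith
    qed
    have inr2: "y + s \<le> MM" if "y \<in> {1..N'}" for y
    proof -
      have "y \<le> N'" using that by simp
      then show ?thesis unfolding s_def MM_def using LN(1,2) dD by arith
    qed
    have inr3: "y + s \<in> {1..MM}" if "y \<in> {1..N'}" for y
      using inr1[OF that] inr2[OF that] LN(2) by simp
    have c'col: "c' \<in> colorings N' (r-1)"
      unfolding colorings_def c'_def
    proof (rule restrict_PiE_iff[THEN iffD2], intro ballI)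
      fix y assume y: "y \<in> {1..N'}"
      have a1: "c (y+s) < r" using crange inr3[OF y] by blast
      have a2: "c (y+s) \<noteq> j" using avoid inr1[OF y] inr2[OF y] by blast
      have "N \<le> MM" using N'pos unfolding MM_def by linarith
      then have "L \<in> {1..MM}" using LN by simp
      then have a3: "j < r" unfolding j_def using crange by blast
      show "f (c (y + s)) \<in> {..<r - 1}" using a1 a2 a3 unfolding f_def by auto
    qed
    then obtain w' where w': "w' \<in> mono_waves N' k c'"
      using P2 unfolding wave_property_def by blast
    have w'props: "length w' = k \<and> ascending_wave w' \<and> set w' \<subseteq> {1..N'} \<and>
      (\<forall>x\<in>set w'. \<forall>y\<in>set w'. c' x = c' y)" using w' unfolding mono_waves_def by (rule CollectD)
    have w'len: "length w' = k" using w'props by blast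
    have w'wav: "ascending_wave w'" using w'props by blast
    have w'set: "set w' \<subseteq> {1..N'}" using w'props by blast
    have w'mono: "\<forall>x\<in>set w'. \<forall>y\<in>set w'. c' x = c' y" using conjunct2[OF conjunct2[OF conjunct2[OF w'props]]] .
    define w2 where "w2 = map (\<lambda>x. x + s) w'"
    have wav2: "ascending_wave w2" unfolding w2_def by (rule wave_shift[OF w'wav])
    have set2: "set w2 \<subseteq> {1..MM}"
    proof
      fix a assume "a \<in> set w2"
      then obtain a' where a': "a' \<in> set w'" "a = a' + s" unfolding w2_def by auto
      have "a' \<in> {1..N'}" using a'(1) w'set by blast
      then show "a \<in> {1..MM}" using inr3 a'(2) by blast
    qed
    have mono2: "\<forall>a\<in>set w2. \<forall>b\<in>set w2. c a = c b"
    proof (intro ballI)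
      fix a b assume "a \<in> set w2" "b \<in> set w2"
      then obtain a' b' where ab: "a' \<in> set w'" "b' \<in> set w'" "a = a' + s" "b = b' + s"
        unfolding w2_def by auto
      have ab1: "a' \<in> {1..N'}" "b' \<in> {1..N'}" using ab(1,2) w'set by blast+
      have "c' a' = c' b'" using w'mono ab(1,2) by blast
      then have eqf: "f (c a) = f (c b)" using ab1 ab(3,4) unfolding c'_def by simp
      have na: "c a \<noteq> j" using avoid inr1[OF ab1(1)] inr2[OF ab1(1)] ab(3) by blast
      have nb: "c b \<noteq> j" using avoid inr1[OF ab1(2)] inr2[OF ab1(2)] ab(4) by blast
      show "c a = c b" using eqf na nb unfolding f_def by (auto split: if_splits)
    qed
    have len2: "length w2 = k" unfolding w2_def using w'len by simp
    have "w2 \<in> mono_waves MM k c" unfolding mono_waves_def mem_Collect_eq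
      using len2 wav2 set2 mono2 by blast
    then show ?thesis by blast
  qed
qed

declare M.simps[simp del]

lemma main: "1 \<le> k \<Longrightarrow> 1 \<le> r \<Longrightarrow> wave_property k r (M k r)"
proof (induction k r rule: M.induct)
  case (1 k r)
  show ?case
  proof (cases "r = 1")
    case True then show ?thesis using 1 base_r1 by (subst M.simps) simp
  next
    case r1: False
    show ?thesis
    proof (cases "k = 1")
      case True then show ?thesis using 1 r1 base_k1 by (subst M.simps) simp
    next
      case k1: False
      show ?thesis
      proof (cases "k = 2")
        case True then show ?thesis using 1 r1 base_k2 by (subst M.simps) simp
      next
        case k2: False
        have h1: "wave_property (k-1) r (M (k-1) r)" using 1 r1 k1 k2 by simp
        have h2: "wave_property k (r-1) (M k (r-1))" using 1 r1 k1 k2 by simp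
        have "M k r = M (k-1) r + Delta (M (k-1) r) (k-1) r + M k (r-1) - 1"
          using 1 r1 k1 k2 by (subst M.simps) simp
        then show ?thesis using step[OF _ _ h1 h2] 1 r1 k1 k2 by simp
      qed
    qed
  qed
qed

lemma AW_le: assumes "1 \<le> k" "1 \<le> r" shows "AW k r \<le> M k r"
  unfolding AW_def using main[OF assms] wave_pos[OF main[OF assms] assms(1)]
  by (intro Least_le) simp

theorem lemma1p1:
  shows "(\<forall>k r. 3 \<le> k \<longrightarrow> 2 \<le> r \<longrightarrow>
            wave_property (k-1) r (M (k-1) r) \<and> AW (k-1) r \<le> M (k-1) r) \<and>
         (\<forall>k r. 1 \<le> k \<longrightarrow> 1 \<le> r \<longrightarrow>
            wave_property k r (M k r) \<and> AW k r \<le> M k r)"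
  using main AW_le by simp

end
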